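(* Let $u=u(t,x)$ be a smooth function on $[0,T)\times S^1$ and let $\eta$ be its flow, i.e. $\eta:[0,T)\times\mathbb{R}\to\mathbb{R}$ with $\eta(t,x+1)=\eta(t,x)+1$, $\partial_t\eta(t,x)=u(t,\eta(t,x))$, $\eta(0,x)=x$. Then $u$ is a solution of the $\mu$B equation $$u_{txx}+3u_xu_{xx}+uu_{xxx}=0$$ if and only if the horizontal component of the acceleration of $\eta$ vanishes, i.e. $$P_\eta\nabla_{\dot\eta}\dot\eta=\partial_t^2\eta(t,x)-\int_0^1\partial_t^2\eta(t,y)\,dy=0\quad\text{for all }t,x.$$ Moreover, if $u$ is such a solution with $u(0,\cdot)=u_0$, then $\eta(t,x)=x+t\big(u_0(x)-u_0(0)\big)+\eta(t,0)$ for all $x\in[0,1]$ and all sufficiently small $t\ge0$.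
   Context: $S^1=\mathbb{R}/\mathbb{Z}\simeq[0,1)$. On the group of circle diffeomorphisms equipped with the $L^2$ metric $\langle V,W\rangle=\int_0^1V(x)W(x)\,dx$ on each tangent space, the Levi-Civita covariant derivative along a curve $\eta(t)$ satisfies $\nabla_{\dot\eta}\dot\eta=\ddot\eta=\partial_t^2\eta$, and the horizontal projection for the Riemannian submersion onto the quotient by rotations is $P_\eta(W)=W-\int_0^1W(x)\,dx$. *)

theory Defs
  imports "HOL-Analysis.Analysis"
begin

text \<open>Functions on [0,T) x R are curried: f t x. Partial derivatives: in x (two-sided),
  in t taken within [0,T) (one-sided at t = 0).\<close>

definition dX :: "(real \<Rightarrow> real \<Rightarrow> real) \<Rightarrow> real \<Rightarrow> real \<Rightarrow> real" where
  "dX f = (\<lambda>t x. deriv (\<lambda>y. f t y) x)"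

definition dT :: "real \<Rightarrow> (real \<Rightarrow> real \<Rightarrow> real) \<Rightarrow> real \<Rightarrow> real \<Rightarrow> real" where
  "dT T f = (\<lambda>t x. vector_derivative (\<lambda>s. f s x) (at t within {0..<T}))"

text \<open>Iterated partial derivatives: True = d/dt, False = d/dx (applied right to left).\<close>
fun pd :: "real \<Rightarrow> bool list \<Rightarrow> (real \<Rightarrow> real \<Rightarrow> real) \<Rightarrow> real \<Rightarrow> real \<Rightarrow> real" where
  "pd T [] f = f"
| "pd T (True # w) f = dT T (pd T w f)"
| "pd T (False # w) f = dX (pd T w f)"

definition smooth_cyl :: "real \<Rightarrow> (real \<Rightarrow> real \<Rightarrow> real) \<Rightarrow> bool" where
  "smooth_cyl T f \<longleftrightarrow> (\<forall>w. continuous_on ({0..<T} \<times> UNIV) (\<lambda>(t, x). pd T w f t x) \<and>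
     (\<forall>t\<in>{0..<T}. \<forall>x. (\<lambda>s. pd T w f s x) differentiable (at t within {0..<T}) \<and>
                       (\<lambda>y. pd T w f t y) differentiable (at x)))"

definition muB_solution :: "real \<Rightarrow> (real \<Rightarrow> real \<Rightarrow> real) \<Rightarrow> bool" where
  "muB_solution T u \<longleftrightarrow> (\<forall>t\<in>{0..<T}. \<forall>x.
     dT T (dX (dX u)) t x + 3 * dX u t x * dX (dX u) t x + u t x * dX (dX (dX u)) t x = 0)"

end

theory Submission
  imports Defs
begin

lemma pd_append: "pd T w (pd T w' f) = pd T (w @ w') f"
  by (induction w) (auto split: bool.splits, (case_tac a; simp)+)

lemma smooth_pd: "smooth_cyl T v \<Longrightarrow> smooth_cyl T (pd T w' v)"
  unfolding smooth_cyl_def by (simp add: pd_append)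

lemma smooth_dX: "smooth_cyl T v \<Longrightarrow> smooth_cyl T (dX v)"
  using smooth_pd[of T v "[False]"] by simp

lemma smooth_dT: "smooth_cyl T v \<Longrightarrow> smooth_cyl T (dT T v)"
  using smooth_pd[of T v "[True]"] by simp

lemma sm_cont: "smooth_cyl T v \<Longrightarrow> continuous_on ({0..<T} \<times> UNIV) (\<lambda>(t, x). v t x)"
  unfolding smooth_cyl_def by (metis pd.simps(1))

lemma sm_dx: "smooth_cyl T v \<Longrightarrow> t \<in> {0..<T} \<Longrightarrow> ((\<lambda>y. v t y) has_real_derivative dX v t x) (at x)"
  unfolding smooth_cyl_def dX_def
  by (metis DERIV_deriv_iff_real_differentiable pd.simps(1))

lemma sm_dt: "smooth_cyl T v \<Longrightarrow> t \<in> {0..<T} \<Longrightarrow> ((\<lambda>s. v s x) has_real_derivative dT T v t x) (at t within {0..<T})"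
  unfolding smooth_cyl_def dT_def
  by (metis has_real_derivative_iff_has_vector_derivative vector_derivative_works pd.simps(1))

lemma nontriv: "0 < (T::real) \<Longrightarrow> t \<in> {0..<T} \<Longrightarrow> at t within {0..<T} \<noteq> bot"
  using islimpt_Ico[of 0 T t] by (auto simp add: trivial_limit_within)

lemma vd_eq: "0 < T \<Longrightarrow> t \<in> {0..<T} \<Longrightarrow> (f has_real_derivative d) (at t within {0..<T}) \<Longrightarrow>
   vector_derivative f (at t within {0..<T}) = d"
  by (metis nontriv vector_derivative_within has_real_derivative_iff_has_vector_derivative)

lemma vd_cong: "t \<in> S \<Longrightarrow> (\<And>s. s \<in> S \<Longrightarrow> f s = g s) \<Longrightarrow>
   vector_derivative f (at t within S) = vector_derivative g (at t within S)"
proof -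
  assume a: "t \<in> S" "\<And>s. s \<in> S \<Longrightarrow> f s = g s"
  have "\<And>f'. (f has_vector_derivative f') (at t within S) = (g has_vector_derivative f') (at t within S)"
    by (rule has_vector_derivative_cong_ev) (use a in \<open>auto intro: always_eventually\<close>)
  then show ?thesis unfolding vector_derivative_def by simp
qed


lemma mvt_bound:
  fixes g g' :: "real \<Rightarrow> real"
  assumes d: "\<And>y. (g has_real_derivative g' y) (at y)"
   and b: "\<And>y. \<bar>y - a\<bar> \<le> \<bar>b - a\<bar> \<Longrightarrow> \<bar>g' y - c\<bar> \<le> e"
  shows "\<bar>g b - g a - c*(b-a)\<bar> \<le> e*\<bar>b-a\<bar>"
proof -
  have dd: "\<And>y. ((\<lambda>y. g y - c*y) has_real_derivative (g' y - c)) (at y)"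
    by (auto intro!: derivative_eq_intros d)
  consider "a<b" | "a=b" | "b<a" by linarith
  then show ?thesis
  proof cases
    case 1
    from MVT2[OF 1, of "\<lambda>y. g y - c*y" "\<lambda>y. g' y - c"] dd obtain z where
      z: "a<z" "z<b" "(g b - c*b) - (g a - c*a) = (b-a)*(g' z - c)" by blast
    have "\<bar>g' z - c\<bar> \<le> e" using b z by auto
    moreover have "g b - g a - c*(b-a) = (b-a)*(g' z - c)" using z(3) by (simp add: algebra_simps)
    then have "\<bar>g b - g a - c*(b-a)\<bar> = \<bar>b-a\<bar> * \<bar>g' z - c\<bar>" by (simp add: abs_mult)
    ultimately show ?thesis using 1 by (simp add: mult.commute mult_left_mono)
  next
    case 2 then show ?thesis by simp
  next
    case 3
    from MVT2[OF 3, of "\<lambda>y. g y - c*y" "\<lambda>y. g' y - c"] dd obtain z where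
      z: "b<z" "z<a" "(g a - c*a) - (g b - c*b) = (a-b)*(g' z - c)" by blast
    have "\<bar>g' z - c\<bar> \<le> e" using b z by auto
    moreover have "g b - g a - c*(b-a) = (b-a)*(g' z - c)" using z(3) by (simp add: algebra_simps)
    then have "\<bar>g b - g a - c*(b-a)\<bar> = \<bar>b-a\<bar> * \<bar>g' z - c\<bar>" by (simp add: abs_mult)
    ultimately show ?thesis using 3 by (simp add: mult.commute mult_left_mono)
  qed
qed

lemma per_nat: "(\<And>y. f (y + 1) = f (y::real)) \<Longrightarrow> f (y + real n) = f y"
proof (induction n arbitrary: y)
  case (Suc n) then show ?case by (metis add.assoc of_nat_Suc add.commute)
qed simp

lemma per_int: "(\<And>y. f (y + 1) = f (y::real)) \<Longrightarrow> f (y + real_of_int k) = f y"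
proof (cases "k \<ge> 0")
  case True
  assume p: "\<And>y. f (y + 1) = f (y::real)"
  then show ?thesis using True per_nat[where f=f and y=y and n="nat k", OF p] by simp
next
  case False
  assume p: "\<And>y. f (y + 1) = f (y::real)"
  have "f ((y + real_of_int k) + real (nat (-k))) = f (y + real_of_int k)" by (rule per_nat[where f=f, OF p])
  then show ?thesis using False by simp
qed

lemma per_frac: "(\<And>y. f (y + 1) = f (y::real)) \<Longrightarrow> f y = f (y - of_int (floor y))"
  using per_int[of f y "- floor y"] by simp

lemma per_deriv: "(\<And>y. f (y + 1) = f (y::real)) \<Longrightarrow> (\<And>y. (f has_real_derivative f' y) (at y)) \<Longrightarrow>
   f' (y + 1) = f' y"
proof -
  assume p: "\<And>y. f (y + 1) = f (y::real)" and d: "\<And>y. (f has_real_derivative f' y) (at y)"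
  have "((\<lambda>x. f (x + 1)) has_real_derivative f' (y+1)) (at y)" using d[of "y+1"] DERIV_shift by blast
  then have "(f has_real_derivative f' (y+1)) (at y)" using p by simp
  then show ?thesis using d[of y] DERIV_unique by blast
qed


lemma chain:
  fixes u ux :: "real \<Rightarrow> real \<Rightarrow> real" and p :: "real \<Rightarrow> real" and D :: "real set"
  assumes ut: "((\<lambda>s. u s (p t)) has_real_derivative ut) (at t within D)"
   and ux: "\<And>s y. s \<in> D \<Longrightarrow> ((\<lambda>y. u s y) has_real_derivative ux s y) (at y)"
   and cont: "continuous_on (D \<times> UNIV) (\<lambda>(s,y). ux s y)"
   and p: "(p has_real_derivative v) (at t within D)"
   and t: "t \<in> D"
  shows "((\<lambda>s. u s (p s)) has_real_derivative (ut + ux t (p t) * v)) (at t within D)"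
proof -
  define R where "R s = (if p s = p t then 0 else (u s (p s) - u s (p t))/(p s - p t) - ux t (p t))" for s
  have R: "(R \<longlongrightarrow> 0) (at t within D)"
  proof (rule tendstoI)
    fix e :: real assume e: "0<e"
    have tD: "(t, p t) \<in> D \<times> UNIV" using t by simp
    from continuous_on_iff[THEN iffD1, OF cont, rule_format, OF tD, of "e/2"] e
    obtain d where d: "d>0" "\<And>z. z\<in>D\<times>UNIV \<Longrightarrow> dist z (t,p t) < d \<Longrightarrow> dist ((\<lambda>(s,y). ux s y) z) (ux t (p t)) < e/2"
      by auto
    have "continuous (at t within D) p" using p by (rule DERIV_continuous)
    then have pc: "(p \<longlongrightarrow> p t) (at t within D)" by (simp add: continuous_within)
    have ev1: "eventually (\<lambda>s. dist (p s) (p t) < d/2) (at t within D)"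
      using tendstoD[OF pc, of "d/2"] d by simp
    have ev2: "eventually (\<lambda>s. dist s t < d/2 \<and> s \<in> D) (at t within D)"
      unfolding eventually_at using d by (intro exI[of _ "d/2"]) auto
    show "eventually (\<lambda>s. dist (R s) 0 < e) (at t within D)"
      using ev1 ev2
    proof eventually_elim
      case (elim s)
      show ?case
      proof (cases "p s = p t")
        case True then show ?thesis using e by (simp add: R_def)
      next
        case False
        have b: "\<bar>u s (p s) - u s (p t) - ux t (p t) * (p s - p t)\<bar> \<le> e/2 * \<bar>p s - p t\<bar>"
        proof (rule mvt_bound[where g' = "ux s"])
          show "\<And>y. ((\<lambda>y. u s y) has_real_derivative ux s y) (at y)" using ux elim by auto
          fix y assume y: "\<bar>y - p t\<bar> \<le> \<bar>p s - p t\<bar>"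
          have "dist (s,y) (t,p t) \<le> dist s t + dist y (p t)"
            unfolding dist_Pair_Pair by (rule sqrt_sum_squares_le_sum_abs[THEN order_trans]) auto
          also have "\<dots> < d" using elim y by (simp add: dist_real_def)
          finally show "\<bar>ux s y - ux t (p t)\<bar> \<le> e/2" using d(2)[of "(s,y)"] elim by (force simp: dist_real_def)
        qed
        have "R s = (u s (p s) - u s (p t) - ux t (p t) * (p s - p t))/(p s - p t)"
          using False by (simp add: R_def field_simps)
        then have "\<bar>R s\<bar> \<le> e/2" using b False by (simp add: abs_divide divide_le_eq)
        then show ?thesis using e by simp
      qed
    qed
  qed
  have eq: "(\<lambda>s. (u s (p s) - u t (p t)) / (s - t)) =
      (\<lambda>s. (R s + ux t (p t)) * ((p s - p t) / (s - t)) + (u s (p t) - u t (p t)) / (s - t))"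
  proof
    fix s show "(u s (p s) - u t (p t)) / (s - t) =
      (R s + ux t (p t)) * ((p s - p t) / (s - t)) + (u s (p t) - u t (p t)) / (s - t)"
    proof (cases "p s = p t")
      case True then show ?thesis by (simp add: R_def diff_divide_distrib)
    next
      case False
      have "R s + ux t (p t) = (u s (p s) - u s (p t))/(p s - p t)" using False by (simp add: R_def)
      then have "(R s + ux t (p t)) * ((p s - p t) / (s - t)) = (u s (p s) - u s (p t)) / (s - t)"
        using False by simp
      then show ?thesis by (simp add: diff_divide_distrib)
    qed
  qed
  have pq: "((\<lambda>s. (p s - p t) / (s - t)) \<longlongrightarrow> v) (at t within D)"
    using p by (simp add: has_field_derivative_iff)
  have uq: "((\<lambda>s. (u s (p t) - u t (p t)) / (s - t)) \<longlongrightarrow> ut) (at t within D)"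
    using ut by (simp add: has_field_derivative_iff)
  have "((\<lambda>s. (R s + ux t (p t)) * ((p s - p t) / (s - t)) + (u s (p t) - u t (p t)) / (s - t))
      \<longlongrightarrow> (0 + ux t (p t)) * v + ut) (at t within D)"
    by (intro tendsto_intros R pq uq)
  then show ?thesis unfolding has_field_derivative_iff eq by (simp add: add.commute)
qed


lemma cont_slice_t: "continuous_on (D\<times>UNIV) (\<lambda>(s,y). g s y) \<Longrightarrow> A \<subseteq> D \<Longrightarrow> continuous_on A (\<lambda>s. g s y)"
  by (rule continuous_on_compose2[of "D\<times>UNIV" "\<lambda>(s,y). g s y" A "\<lambda>s. (s,y)", simplified])
     (auto intro!: continuous_intros)

lemma cont_slice_x: "continuous_on (D\<times>UNIV) (\<lambda>(s,y). g s y) \<Longrightarrow> s \<in> D \<Longrightarrow> continuous_on A (\<lambda>y. g s y)"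
  by (rule continuous_on_compose2[of "D\<times>UNIV" "\<lambda>(s,y). g s y" A "\<lambda>y. (s,y)", simplified])
     (auto intro!: continuous_intros)

lemma cont_swap:
  assumes c: "continuous_on (D\<times>UNIV) (\<lambda>(s,y). g s y)" and A: "A \<subseteq> D"
  shows "continuous_on (UNIV \<times> A) (\<lambda>(y,r). g r y)"
proof -
  have "continuous_on (UNIV \<times> A) (\<lambda>z. (\<lambda>(s,y). g s y) (snd z, fst z))"
    by (rule continuous_on_compose2[OF c]) (use A in \<open>auto intro!: continuous_intros\<close>)
  moreover have "(\<lambda>(y,r). g r y) = (\<lambda>z. (\<lambda>(s,y). g s y) (snd z, fst z))" by auto
  ultimately show ?thesis by simp
qed

lemma mixed:
  assumes T: "0<T" and sm: "smooth_cyl T v" and t: "t \<in> {0..<T}"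
  shows "dT T (dX v) t x = dX (dT T v) t x"
proof -
  define D where "D = {0..<T}"
  define b where "b = (t+T)/2"
  have b: "t < b" "b < T" using t by (auto simp: b_def)
  have bD: "{0..b} \<subseteq> D" using b by (auto simp: D_def)
  have contvt: "continuous_on (D\<times>UNIV) (\<lambda>(s,y). dT T v s y)" unfolding D_def by (rule sm_cont[OF smooth_dT[OF sm]])
  have contvtx: "continuous_on (D\<times>UNIV) (\<lambda>(s,y). dX (dT T v) s y)"
    unfolding D_def by (rule sm_cont[OF smooth_dX[OF smooth_dT[OF sm]]])
  have dvt: "\<And>s y. s \<in> D \<Longrightarrow> ((\<lambda>y. dT T v s y) has_real_derivative dX (dT T v) s y) (at y)"
    unfolding D_def by (rule sm_dx[OF smooth_dT[OF sm]])
  have dv_t: "\<And>s y. s \<in> D \<Longrightarrow> ((\<lambda>s. v s y) has_real_derivative dT T v s y) (at s within D)"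
    unfolding D_def by (rule sm_dt[OF sm])
  have dv_x: "\<And>s y. s \<in> D \<Longrightarrow> ((\<lambda>y. v s y) has_real_derivative dX v s y) (at y)"
    unfolding D_def by (rule sm_dx[OF sm])
  have step1: "v s y = v 0 y + integral {0..s} (\<lambda>r. dT T v r y)" if s: "s \<in> {0..b}" for s y
  proof -
    have sub: "{0..s} \<subseteq> D" using s bD by auto
    have "((\<lambda>r. dT T v r y) has_integral (v s y - v 0 y)) {0..s}"
    proof (rule fundamental_theorem_of_calculus)
      show "0 \<le> s" using s by simp
      fix r assume r: "r \<in> {0..s}"
      then have "r \<in> D" using sub by auto
      then show "((\<lambda>r. v r y) has_vector_derivative dT T v r y) (at r within {0..s})"
        using dv_t[of r y] sub
        by (simp add: has_real_derivative_iff_has_vector_derivative[symmetric] has_field_derivative_subset)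
    qed
    then show ?thesis by (simp add: integral_unique)
  qed
  have step2: "dX v s x = dX v 0 x + integral {0..s} (\<lambda>r. dX (dT T v) r x)" if s: "s \<in> {0..b}" for s
  proof -
    have sub: "{0..s} \<subseteq> D" using s bD by auto
    have L: "((\<lambda>y. integral (cbox 0 s) (\<lambda>r. dT T v r y)) has_field_derivative
             integral (cbox 0 s) (\<lambda>r. dX (dT T v) r x)) (at x within UNIV)"
    proof (rule leibniz_rule_field_derivative[where f="\<lambda>y r. dT T v r y" and fx="\<lambda>y r. dX (dT T v) r y"])
      show "\<And>y r. y \<in> UNIV \<Longrightarrow> r \<in> cbox 0 s \<Longrightarrow>
          ((\<lambda>y. dT T v r y) has_field_derivative dX (dT T v) r y) (at y within UNIV)"
        using dvt sub by auto
      show "\<And>y. y \<in> UNIV \<Longrightarrow> (\<lambda>r. dT T v r y) integrable_on cbox 0 s"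
        using cont_slice_t[OF contvt sub] by (auto intro: integrable_continuous_real)
      show "continuous_on (UNIV \<times> cbox 0 s) (\<lambda>(y, r). dX (dT T v) r y)"
        using cont_swap[OF contvtx sub] by simp
    qed auto
    have "((\<lambda>y. v s y) has_real_derivative dX v 0 x + integral {0..s} (\<lambda>r. dX (dT T v) r x)) (at x)"
    proof -
      have "((\<lambda>y. v 0 y + integral {0..s} (\<lambda>r. dT T v r y)) has_real_derivative
         dX v 0 x + integral {0..s} (\<lambda>r. dX (dT T v) r x)) (at x)"
        using L dv_x[of 0 x] T by (auto intro!: derivative_intros simp: D_def)
      moreover have "(\<lambda>y. v s y) = (\<lambda>y. v 0 y + integral {0..s} (\<lambda>r. dT T v r y))"
        using step1[OF s] by auto
      ultimately show ?thesis by simp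
    qed
    moreover have "s \<in> D" using s bD by auto
    ultimately show ?thesis using dv_x[of s x] DERIV_unique by blast
  qed
  have "((\<lambda>s. dX v 0 x + integral {0..s} (\<lambda>r. dX (dT T v) r x)) has_real_derivative dX (dT T v) t x)
      (at t within {0..b})"
    using integral_has_vector_derivative[OF cont_slice_t[OF contvtx bD], of t] b t
    by (auto intro!: derivative_eq_intros simp: has_real_derivative_iff_has_vector_derivative)
  then have "((\<lambda>s. dX v s x) has_real_derivative dX (dT T v) t x) (at t within {0..b})"
  proof (rule has_field_derivative_transform_within[where d=1])
    show "t \<in> {0..b}" using b t by auto
    fix s assume "s \<in> {0..b}"
    then show "dX v 0 x + integral {0..s} (\<lambda>r. dX (dT T v) r x) = dX v s x" by (rule step2[symmetric])
  qed simp
  moreover have "at t within {0..b} = at t within D"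
    by (rule at_within_nhd[of t "{..<b}"]) (use b in \<open>auto simp: D_def\<close>)
  ultimately have "((\<lambda>s. dX v s x) has_real_derivative dX (dT T v) t x) (at t within {0..<T})"
    by (simp add: D_def)
  then show ?thesis using vd_eq[OF T t] by (simp add: dT_def)
qed


lemma eta_lip:
  fixes u \<eta> :: "real \<Rightarrow> real \<Rightarrow> real"
  assumes T: "0<T" and t: "t \<in> {0..<T}" and L: "0 \<le> L"
   and lip: "\<And>s a b. s \<in> {0..t} \<Longrightarrow> \<bar>u s a - u s b\<bar> \<le> L * \<bar>a - b\<bar>"
   and eta: "\<And>s x. s \<in> {0..<T} \<Longrightarrow> ((\<lambda>s. \<eta> s x) has_real_derivative u s (\<eta> s x)) (at s within {0..<T})"
   and e0: "\<And>x. \<eta> 0 x = x"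
  shows "\<bar>\<eta> t x - \<eta> t x'\<bar> \<le> exp (L * t) * \<bar>x - x'\<bar>"
proof -
  define D where "D = {0..<T}"
  define d where "d s = \<eta> s x - \<eta> s x'" for s
  define e where "e s = u s (\<eta> s x) - u s (\<eta> s x')" for s
  define g where "g s = (d s)^2 * exp (- 2 * L * s)" for s
  define g' where "g' s = 2 * exp(- 2 * L * s) * (d s * e s - L * (d s)^2)" for s
  have dd: "(d has_real_derivative e s) (at s within D)" if "s\<in>D" for s
    unfolding d_def e_def using eta[of s x] eta[of s x'] that
    by (auto intro!: derivative_eq_intros simp: D_def)
  have dg: "(g has_real_derivative g' s) (at s within D)" if s: "s\<in>D" for s
  proof -
    have "(g has_real_derivative (2 * d s * e s * exp (- 2 * L * s) + (d s)^2 * (exp (- 2 * L * s) * (- 2 * L)))) (at s within D)"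
      unfolding g_def by (rule derivative_eq_intros dd[OF s] refl | simp)+
    moreover have "2 * d s * e s * exp (- 2 * L * s) + (d s)^2 * (exp (- 2 * L * s) * (- 2 * L)) = g' s"
      by (simp add: g'_def algebra_simps)
    ultimately show ?thesis by simp
  qed
  have g'le: "g' s \<le> 0" if s: "s\<in>{0..t}" for s
  proof -
    have "\<bar>e s\<bar> \<le> L * \<bar>d s\<bar>" unfolding e_def d_def using lip[OF s] by blast
    then have "d s * e s \<le> \<bar>d s\<bar> * (L * \<bar>d s\<bar>)"
      by (metis abs_ge_self abs_mult abs_ge_zero mult_left_mono order_trans)
    also have "\<dots> = L * (d s)^2" by (simp add: power2_eq_square algebra_simps)
    finally show ?thesis unfolding g'_def by (simp add: mult_nonpos_nonneg mult_nonneg_nonpos)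
  qed
  have tD: "{0..t} \<subseteq> D" using t by (auto simp: D_def)
  have cont: "continuous_on {0..t} g"
  proof -
    have "continuous_on D g"
      using dg by (auto simp: continuous_on_eq_continuous_within intro: DERIV_continuous)
    then show ?thesis using tD continuous_on_subset by blast
  qed
  have "g t \<le> g 0"
  proof (rule DERIV_nonpos_imp_decreasing_open[of 0 t g])
    show "0 \<le> t" using t by simp
    fix z assume z: "0 < z" "z < t"
    then have "z \<in> interior D" using t by (auto simp: D_def)
    then have "at z within D = at z" by (rule at_within_interior)
    moreover have "z \<in> D" using z t by (auto simp: D_def)
    ultimately have "(g has_real_derivative g' z) (at z)" using dg by metis
    then show "\<exists>y. (g has_real_derivative y) (at z) \<and> y \<le> 0" using g'le[of z] z by auto
  qed (rule cont)
  then have "(d t)^2 * exp (- 2 * L * t) \<le> (x - x')^2" by (simp add: g_def d_def e0)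
  then have "(d t)^2 \<le> (x - x')^2 * exp (2 * L * t)"
    by (simp add: exp_minus field_simps)
  also have "\<dots> = (exp (L * t) * \<bar>x - x'\<bar>)^2"
  proof -
    have "exp (2 * L * t) = exp (L * t) * exp (L * t)" by (simp add: exp_add[symmetric])
    moreover have "\<bar>x - x'\<bar> * \<bar>x - x'\<bar> = (x - x') * (x - x')" by (simp add: abs_mult_self_eq)
    ultimately show ?thesis by (simp add: power2_eq_square mult_ac)
  qed
  finally have "\<bar>d t\<bar>^2 \<le> (exp (L * t) * \<bar>x - x'\<bar>)^2" by simp
  then show ?thesis unfolding d_def by (rule power2_le_imp_le) simp
qed


theorem theorem7p1:
  fixes T :: real and u \<eta> :: "real \<Rightarrow> real \<Rightarrow> real"
  assumes "0 < T"
    and "smooth_cyl T u"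
    and "\<And>t x. t \<in> {0..<T} \<Longrightarrow> u t (x + 1) = u t x"
    and "\<And>t x. t \<in> {0..<T} \<Longrightarrow> \<eta> t (x + 1) = \<eta> t x + 1"
    and "\<And>t x. t \<in> {0..<T} \<Longrightarrow>
           ((\<lambda>s. \<eta> s x) has_real_derivative u t (\<eta> t x)) (at t within {0..<T})"
    and "\<And>x. \<eta> 0 x = x"
  shows "(muB_solution T u \<longleftrightarrow>
           (\<forall>t\<in>{0..<T}. \<forall>x. dT T (dT T \<eta>) t x - integral {0..1} (\<lambda>y. dT T (dT T \<eta>) t y) = 0))
       \<and> (muB_solution T u \<longrightarrow>
           (\<exists>\<delta>>0. \<forall>t. 0 \<le> t \<and> t < \<delta> \<and> t < T \<longrightarrow>
              (\<forall>x\<in>{0..1}. \<eta> t x = x + t * (u 0 x - u 0 0) + \<eta> t 0)))"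
proof -
  note T = assms(1) and sm = assms(2) and uper = assms(3) and etaper = assms(4)
    and eta = assms(5) and e0 = assms(6)
  define D where "D = {0..<T}"
  define F where "F t y = dT T u t y + u t y * dX u t y" for t y
  define Fx where "Fx t y = dX (dT T u) t y + dX u t y * dX u t y + u t y * dX (dX u) t y" for t y
  define Fxx where "Fxx t y = dX (dX (dT T u)) t y + 3 * dX u t y * dX (dX u) t y
      + u t y * dX (dX (dX u)) t y" for t y
  have du: "\<And>t y. t \<in> D \<Longrightarrow> ((\<lambda>y. u t y) has_real_derivative dX u t y) (at y)"
    unfolding D_def by (rule sm_dx[OF sm])
  have dux: "\<And>t y. t \<in> D \<Longrightarrow> ((\<lambda>y. dX u t y) has_real_derivative dX (dX u) t y) (at y)"
    unfolding D_def by (rule sm_dx[OF smooth_dX[OF sm]])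
  have duxx: "\<And>t y. t \<in> D \<Longrightarrow> ((\<lambda>y. dX (dX u) t y) has_real_derivative dX (dX (dX u)) t y) (at y)"
    unfolding D_def by (rule sm_dx[OF smooth_dX[OF smooth_dX[OF sm]]])
  have dut: "\<And>t y. t \<in> D \<Longrightarrow> ((\<lambda>y. dT T u t y) has_real_derivative dX (dT T u) t y) (at y)"
    unfolding D_def by (rule sm_dx[OF smooth_dT[OF sm]])
  have dutx: "\<And>t y. t \<in> D \<Longrightarrow> ((\<lambda>y. dX (dT T u) t y) has_real_derivative dX (dX (dT T u)) t y) (at y)"
    unfolding D_def by (rule sm_dx[OF smooth_dX[OF smooth_dT[OF sm]]])
  have hF: "((\<lambda>y. F t y) has_real_derivative Fx t y) (at y)" if t: "t \<in> D" for t y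
  proof -
    have "((\<lambda>y. F t y) has_real_derivative
        dX (dT T u) t y + (dX u t y * dX u t y + u t y * dX (dX u) t y)) (at y)"
      unfolding F_def by (rule derivative_eq_intros du[OF t] dux[OF t] dut[OF t] refl)+ (simp add: algebra_simps)
    then show ?thesis by (simp add: Fx_def algebra_simps)
  qed
  have hFx: "((\<lambda>y. Fx t y) has_real_derivative Fxx t y) (at y)" if t: "t \<in> D" for t y
  proof -
    have "((\<lambda>y. Fx t y) has_real_derivative
        dX (dX (dT T u)) t y + (dX (dX u) t y * dX u t y + dX u t y * dX (dX u) t y)
         + (dX u t y * dX (dX u) t y + u t y * dX (dX (dX u)) t y)) (at y)"
      unfolding Fx_def by (rule derivative_eq_intros du[OF t] dux[OF t] duxx[OF t] dutx[OF t] refl)+ (simp add: algebra_simps)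
    then show ?thesis by (simp add: Fxx_def algebra_simps)
  qed
  have sym: "dT T (dX (dX u)) t y = dX (dX (dT T u)) t y" if t: "t \<in> D" for t y
  proof -
    have "dT T (dX (dX u)) t y = dX (dT T (dX u)) t y"
      using mixed[OF T smooth_dX[OF sm]] t by (simp add: D_def)
    moreover have "(\<lambda>z. dT T (dX u) t z) = (\<lambda>z. dX (dT T u) t z)"
      using mixed[OF T sm] t by (simp add: D_def)
    ultimately show ?thesis by (simp add: dX_def)
  qed
  have muB_iff: "muB_solution T u \<longleftrightarrow> (\<forall>t\<in>D. \<forall>y. Fxx t y = 0)"
    unfolding muB_solution_def Fxx_def using sym by (simp add: D_def)
  have uxper: "dX u t (y + 1) = dX u t y" if t: "t \<in> D" for t y
    by (rule per_deriv[where f="u t"]) (use uper t du in \<open>auto simp: D_def\<close>)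
  have utper: "dT T u t (y + 1) = dT T u t y" if t: "t \<in> D" for t y
    unfolding dT_def by (rule vd_cong) (use t uper in \<open>auto simp: D_def\<close>)
  have Fper: "F t (y + 1) = F t y" if t: "t \<in> D" for t y
    unfolding F_def using uxper[OF t] utper[OF t] uper t by (simp add: D_def)
  have K: "(\<forall>y. Fxx t y = 0) \<longleftrightarrow> (\<exists>c. \<forall>y. F t y = c)" if t: "t \<in> D" for t
  proof
    assume z: "\<forall>y. Fxx t y = 0"
    obtain c1 where c1: "\<forall>y\<in>UNIV. Fx t y = c1"
      using has_field_derivative_zero_constant[of UNIV "Fx t"] hFx[OF t] z by auto
    have "((\<lambda>y. F t y - c1 * y) has_real_derivative 0) (at y within UNIV)" for y
      using hF[OF t, of y] c1 by (auto intro!: derivative_eq_intros)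
    then obtain c2 where c2: "\<forall>y\<in>UNIV. F t y - c1 * y = c2"
      using has_field_derivative_zero_constant[of UNIV "\<lambda>y. F t y - c1 * y"] by auto
    have "c1 = 0" using c2 Fper[OF t, of 0] by (metis add_0 mult_1_right mult_zero_right UNIV_I diff_zero
          diff_left_imp_eq)
    then show "\<exists>c. \<forall>y. F t y = c" using c2 by auto
  next
    assume "\<exists>c. \<forall>y. F t y = c"
    then obtain c where c: "\<And>y. F t y = c" by blast
    have "Fx t y = 0" for y
    proof -
      have "((\<lambda>y. F t y) has_real_derivative 0) (at y)" using c by simp
      then show ?thesis using hF[OF t, of y] DERIV_unique by blast
    qed
    then have "Fxx t y = 0" for y
    proof -
      assume "\<And>y. Fx t y = 0"
      then have "((\<lambda>y. Fx t y) has_real_derivative 0) (at y)" by simp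
      then show ?thesis using hFx[OF t, of y] DERIV_unique by blast
    qed
    then show "\<forall>y. Fxx t y = 0" by blast
  qed
  have E1: "dT T \<eta> s x = u s (\<eta> s x)" if s: "s \<in> D" for s x
  proof -
    have "vector_derivative (\<lambda>s. \<eta> s x) (at s within {0..<T}) = u s (\<eta> s x)"
      by (rule vd_eq[OF T]) (use s eta in \<open>auto simp: D_def\<close>)
    then show ?thesis by (simp add: dT_def)
  qed
  have E2: "((\<lambda>s. u s (\<eta> s x)) has_real_derivative F t (\<eta> t x)) (at t within D)" if t: "t \<in> D" for t x
  proof -
    have "((\<lambda>s. u s (\<eta> s x)) has_real_derivative (dT T u t (\<eta> t x) + dX u t (\<eta> t x) * u t (\<eta> t x)))
        (at t within D)"
    proof (rule chain[where u=u and ux="dX u" and p="\<lambda>s. \<eta> s x" and ut="dT T u t (\<eta> t x)" and v="u t (\<eta> t x)", simplified])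
      show "((\<lambda>s. u s (\<eta> t x)) has_real_derivative dT T u t (\<eta> t x)) (at t within D)"
        using sm_dt[OF sm] t by (simp add: D_def)
      show "\<And>s y. s \<in> D \<Longrightarrow> ((\<lambda>y. u s y) has_real_derivative dX u s y) (at y)" by (rule du)
      show "continuous_on (D \<times> UNIV) (\<lambda>(s, y). dX u s y)"
        unfolding D_def by (rule sm_cont[OF smooth_dX[OF sm]])
      show "((\<lambda>s. \<eta> s x) has_real_derivative u t (\<eta> t x)) (at t within D)"
        using eta t by (simp add: D_def)
    qed (rule t)
    then show ?thesis by (simp add: F_def mult.commute)
  qed
  have E3: "dT T (dT T \<eta>) t x = F t (\<eta> t x)" if t: "t \<in> D" for t x
  proof -
    have "dT T (dT T \<eta>) t x = vector_derivative (\<lambda>s. dT T \<eta> s x) (at t within {0..<T})"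
      by (simp only: dT_def[of T "dT T \<eta>"])
    also have "\<dots> = vector_derivative (\<lambda>s. u s (\<eta> s x)) (at t within {0..<T})"
      by (rule vd_cong) (use t E1 in \<open>auto simp: D_def\<close>)
    also have "\<dots> = F t (\<eta> t x)"
      by (rule vd_eq[OF T]) (use t E2 in \<open>auto simp: D_def\<close>)
    finally show ?thesis .
  qed
  have surj: "\<exists>x. F t (\<eta> t x) = F t y" if t: "t \<in> D" for t y
  proof -
    have cpt: "compact ((\<lambda>(s,y). dX u s y) ` ({0..t} \<times> {0..1}))"
      by (rule compact_continuous_image[OF continuous_on_subset[OF sm_cont[OF smooth_dX[OF sm]]]])
        (use t in \<open>auto simp: D_def intro: compact_Times\<close>)
    then obtain M where M: "\<forall>z\<in>(\<lambda>(s,y). dX u s y) ` ({0..t} \<times> {0..1}). \<bar>z\<bar> \<le> M"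
      using compact_imp_bounded bounded_real by metis
    define L where "L = max M 0"
    have ub: "\<bar>dX u s y\<bar> \<le> L" if s: "s \<in> {0..t}" for s y
    proof -
      have sD: "s\<in>D" using s t by (auto simp: D_def)
      have "dX u s y = dX u s (y - of_int (floor y))" by (rule per_frac) (rule uxper[OF sD])
      moreover have "y - of_int (floor y) \<in> {0..1}"
        using frac_ge_0[of y] frac_lt_1[of y] by (simp add: frac_def)
      ultimately have mem: "(s, y - of_int (floor y)) \<in> {0..t} \<times> {0..1}" and eq: "dX u s y = dX u s (y - of_int (floor y))"
        using s by auto
      have "dX u s (y - of_int (floor y)) \<in> (\<lambda>(s,y). dX u s y) ` ({0..t} \<times> {0..1})"
        by (rule image_eqI[OF _ mem]) simp
      then have "\<bar>dX u s y\<bar> \<le> M" using M eq by auto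
      then show ?thesis unfolding L_def by linarith
    qed
    have lip: "\<bar>u s a - u s b\<bar> \<le> L * \<bar>a - b\<bar>" if s: "s \<in> {0..t}" for s a b
    proof -
      have sD: "s\<in>D" using s t by (auto simp: D_def)
      have "\<bar>u s a - u s b - 0 * (a - b)\<bar> \<le> L * \<bar>a - b\<bar>"
        by (rule mvt_bound[where g="u s" and g'="dX u s"]) (use du[OF sD] ub[OF s] in auto)
      then show ?thesis by simp
    qed
    have L0: "0 \<le> L" by (simp add: L_def)
    have lipeta: "\<bar>\<eta> t x - \<eta> t x'\<bar> \<le> exp (L * t) * \<bar>x - x'\<bar>" for x x'
      by (rule eta_lip[OF T _ L0 lip eta e0]) (use t in \<open>auto simp: D_def\<close>)
    have conte: "continuous_on UNIV (\<lambda>x. \<eta> t x)"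
      by (rule lipschitz_on_continuous_on[OF lipschitz_onI[of UNIV "\<lambda>x. \<eta> t x" "exp (L * t)"]])
        (auto simp: dist_real_def lipeta)
    define y' where "y' = y - of_int (floor (y - \<eta> t 0))"
    have e1: "\<eta> t 1 = \<eta> t 0 + 1" using etaper[of t 0] t by (simp add: D_def)
    have y'1: "\<eta> t 0 \<le> y'" "y' \<le> \<eta> t 1"
      unfolding y'_def using e1 by linarith+
    obtain x where x: "\<eta> t x = y'"
      using IVT'[of "\<lambda>x. \<eta> t x" 0 y' 1] y'1 continuous_on_subset[OF conte] by auto
    have "F t y' = F t y"
      unfolding y'_def using per_int[where f="F t" and y=y and k="- floor (y - \<eta> t 0)"] Fper[OF t] by simp
    then show ?thesis using x by auto
  qed
  have part1: "muB_solution T u \<longleftrightarrow>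
           (\<forall>t\<in>{0..<T}. \<forall>x. dT T (dT T \<eta>) t x - integral {0..1} (\<lambda>y. dT T (dT T \<eta>) t y) = 0)"
  proof -
    have "(\<exists>c. \<forall>y. F t y = c) \<longleftrightarrow>
       (\<forall>x. dT T (dT T \<eta>) t x - integral {0..1} (\<lambda>y. dT T (dT T \<eta>) t y) = 0)" if t: "t \<in> D" for t
    proof
      assume "\<exists>c. \<forall>y. F t y = c"
      then obtain c where c: "\<And>y. F t y = c" by blast
      have "(\<lambda>y. dT T (dT T \<eta>) t y) = (\<lambda>y. c)" using E3[OF t] c by auto
      then show "\<forall>x. dT T (dT T \<eta>) t x - integral {0..1} (\<lambda>y. dT T (dT T \<eta>) t y) = 0"
        by simp
    next
      assume a: "\<forall>x. dT T (dT T \<eta>) t x - integral {0..1} (\<lambda>y. dT T (dT T \<eta>) t y) = 0"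
      define I where "I = integral {0..1} (\<lambda>y. dT T (dT T \<eta>) t y)"
      have "F t (\<eta> t x) = I" for x using a E3[OF t, of x] by (simp add: I_def)
      then have "F t y = I" for y using surj[OF t, of y] by metis
      then show "\<exists>c. \<forall>y. F t y = c" by blast
    qed
    then show ?thesis using muB_iff K by (auto simp: D_def)
  qed
  have part2: "\<eta> t x = x + t * (u 0 x - u 0 0) + \<eta> t 0"
    if mu: "muB_solution T u" and t: "t \<in> D" for t x
  proof -
    have cst: "\<exists>c. \<forall>y. F s y = c" if "s \<in> D" for s using mu muB_iff K that by blast
    have D0: "0 \<in> D" using T by (simp add: D_def)
    define h' where "h' s = u s (\<eta> s x) - u s (\<eta> s 0) - (u 0 x - u 0 0)" for s
    define h where "h s = \<eta> s x - \<eta> s 0 - x - s * (u 0 x - u 0 0)" for s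
    have "(h' has_real_derivative 0) (at s within D)" if s: "s \<in> D" for s
    proof -
      obtain c where c: "\<And>y. F s y = c" using cst[OF s] by blast
      have "(h' has_real_derivative F s (\<eta> s x) - F s (\<eta> s 0) - 0) (at s within D)"
        unfolding h'_def by (rule derivative_eq_intros E2[OF s] refl)+
      then show ?thesis using c by simp
    qed
    then obtain C where C: "\<forall>s\<in>D. h' s = C"
      using has_field_derivative_zero_constant[of D h'] by (auto simp: D_def)
    have h'0: "\<And>s. s \<in> D \<Longrightarrow> h' s = 0" using C D0 by (metis h'_def e0 diff_self)
    have "(h has_real_derivative 0) (at s within D)" if s: "s \<in> D" for s
    proof -
      have "(h has_real_derivative u s (\<eta> s x) - u s (\<eta> s 0) - 0 - 1 * (u 0 x - u 0 0)) (at s within D)"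
        unfolding h_def using eta[of s x] eta[of s 0] s
        by (auto simp: D_def intro!: derivative_eq_intros)
      then show ?thesis using h'0[OF s] by (simp add: h'_def)
    qed
    then obtain C2 where C2: "\<forall>s\<in>D. h s = C2"
      using has_field_derivative_zero_constant[of D h] by (auto simp: D_def)
    have "h t = 0" using C2 D0 t e0 by (metis h_def diff_self mult_zero_left diff_zero)
    then show ?thesis by (simp add: h_def algebra_simps)
  qed
  show ?thesis
  proof (intro conjI impI)
    show "muB_solution T u \<longleftrightarrow>
           (\<forall>t\<in>{0..<T}. \<forall>x. dT T (dT T \<eta>) t x - integral {0..1} (\<lambda>y. dT T (dT T \<eta>) t y) = 0)"
      by (rule part1)
    assume mu: "muB_solution T u"
    have "\<forall>t. 0 \<le> t \<and> t < T \<and> t < T \<longrightarrow> (\<forall>x\<in>{0..1}. \<eta> t x = x + t * (u 0 x - u 0 0) + \<eta> t 0)"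
    proof (intro allI impI ballI)
      fix t x assume "0 \<le> t \<and> t < T \<and> t < T"
      then have "t \<in> D" by (simp add: D_def)
      then show "\<eta> t x = x + t * (u 0 x - u 0 0) + \<eta> t 0" by (rule part2[OF mu])
    qed
    then show "\<exists>\<delta>>0. \<forall>t. 0 \<le> t \<and> t < \<delta> \<and> t < T \<longrightarrow>
              (\<forall>x\<in>{0..1}. \<eta> t x = x + t * (u 0 x - u 0 0) + \<eta> t 0)"
      using T by blast
  qed
qed

end
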